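(* Let $\mathcal{A}_n$ denote either $\mathcal{C}_{n,A}$ for all $n$, or $\mathcal{C}^*_{n,A}$ for all $n$. For all integers $\ell_1,\ell_2\ge0$ and $n\ge0$, \[r_{\ell_1+\ell_2}(\mathcal{A}_n)=\sum_{i=0}^n\binom{n}{i}\, r_{\ell_1}(\mathcal{A}_i)\, r_{\ell_2}(\mathcal{A}_{n-i}).\]
   Context: Let $A=\{a_1,\dots,a_m\}$ with $a_1>\dots>a_m>0$. For $n\ge1$, $\mathcal{C}_{n,A}$ is the arrangement in $\mathbb{R}^n$ of hyperplanes $x_i-x_j=0$ ($i<j$) and $x_i-x_j=a_k$ ($i\ne j$, $1\le k\le m$); $\mathcal{C}^*_{n,A}$ is the arrangement of hyperplanes $x_i-x_j=a_k$ ($i\ne j$, $1\le k\le m$). Regions are connected components of the complement of the union of the hyperplanes. The level of $X\subseteq\mathbb{R}^n$ is the smallest integer $\ell\ge0$ such that there are a linear subspace $W$ of dimension $\ell$ and $r>0$ with $X\subseteq\{\bm x:\min_{\bm y\in W}\|\bm x-\bm y\|\le r\}$. $r_\ell(\mathcal{A})$ is the number of regions of $\mathcal{A}$ of level $\ell$. Convention: for $n=0$ there is exactly one region, of level $0$. *)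

theory Defs
  imports "HOL-Analysis.Analysis"
begin

text \<open>Points of R^n are encoded as functions nat => real vanishing outside {0..<n}
 (coordinates x_1..x_n of the paper are x 0 .. x (n-1)). The topology is the
 product topology on nat => real, which restricted to Rn n is the Euclidean one.\<close>

definition Rn :: "nat \<Rightarrow> (nat \<Rightarrow> real) set" where
  "Rn n = {x. \<forall>i\<ge>n. x i = 0}"

definition enorm :: "nat \<Rightarrow> (nat \<Rightarrow> real) \<Rightarrow> real" where
  "enorm n x = sqrt (\<Sum>i<n. (x i)^2)"

definition lin_subspace_dim :: "nat \<Rightarrow> nat \<Rightarrow> (nat \<Rightarrow> real) set \<Rightarrow> bool" where
  "lin_subspace_dim n l W \<longleftrightarrow>
     (\<exists>v :: nat \<Rightarrow> nat \<Rightarrow> real.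
        (\<forall>j<l. v j \<in> Rn n) \<and>
        (\<forall>c. (\<lambda>i. \<Sum>j<l. c j * v j i) = (\<lambda>_. 0) \<longrightarrow> (\<forall>j<l. c j = 0)) \<and>
        W = {(\<lambda>i. \<Sum>j<l. c j * v j i) | c. True})"

definition level :: "nat \<Rightarrow> (nat \<Rightarrow> real) set \<Rightarrow> nat" where
  "level n X = (LEAST l. \<exists>W r. lin_subspace_dim n l W \<and> r > 0 \<and>
      X \<subseteq> {x. (INF y\<in>W. enorm n (\<lambda>i. x i - y i)) \<le> r})"

definition hyp :: "nat \<Rightarrow> nat \<Rightarrow> nat \<Rightarrow> real \<Rightarrow> (nat \<Rightarrow> real) set" where
  "hyp n i j a = {x \<in> Rn n. x i - x j = a}"

definition C_arr :: "real set \<Rightarrow> nat \<Rightarrow> (nat \<Rightarrow> real) set" where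
  "C_arr A n = \<Union>{hyp n i j 0 | i j. i < j \<and> j < n}
             \<union> \<Union>{hyp n i j a | i j a. i < n \<and> j < n \<and> i \<noteq> j \<and> a \<in> A}"

definition Cstar_arr :: "real set \<Rightarrow> nat \<Rightarrow> (nat \<Rightarrow> real) set" where
  "Cstar_arr A n = \<Union>{hyp n i j a | i j a. i < n \<and> j < n \<and> i \<noteq> j \<and> a \<in> A}"

definition regions :: "(nat \<Rightarrow> (nat \<Rightarrow> real) set) \<Rightarrow> nat \<Rightarrow> (nat \<Rightarrow> real) set set" where
  "regions H n = {connected_component_set (Rn n - H n) x | x. x \<in> Rn n - H n}"

definition r_level :: "nat \<Rightarrow> (nat \<Rightarrow> (nat \<Rightarrow> real) set) \<Rightarrow> nat \<Rightarrow> nat" where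
  "r_level l H n = card {R \<in> regions H n. level n R = l}"

end

theory Submission
  imports Defs
begin
definition Hf :: "real set \<Rightarrow> nat \<Rightarrow> (nat \<Rightarrow> real) set" where
  "Hf B n = {x \<in> Rn n. \<exists>i<n. \<exists>j<n. i \<noteq> j \<and> x i - x j \<in> B}"
definition Sp :: "real set \<Rightarrow> nat \<Rightarrow> (nat \<Rightarrow> real) set" where
  "Sp B n = Rn n - Hf B n"
definition same :: "real set \<Rightarrow> nat \<Rightarrow> (nat \<Rightarrow> real) \<Rightarrow> (nat \<Rightarrow> real) \<Rightarrow> bool" where
  "same B n x y \<longleftrightarrow> (\<forall>i<n. \<forall>j<n. \<forall>a\<in>B. (x i - x j < a) = (y i - y j < a))"
definition cl :: "real set \<Rightarrow> nat \<Rightarrow> (nat \<Rightarrow> real) \<Rightarrow> (nat \<Rightarrow> real) set" where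
  "cl B n x = {y \<in> Sp B n. same B n x y}"

lemma Sp_iff: "x \<in> Sp B n \<longleftrightarrow> x \<in> Rn n \<and> (\<forall>i<n. \<forall>j<n. i \<noteq> j \<longrightarrow> x i - x j \<notin> B)"
  unfolding Sp_def Hf_def by auto

lemma open_diff_less: "open {y::nat\<Rightarrow>real. y i - y j < a}"
  by (intro open_Collect_less continuous_intros continuous_on_product_coordinates)
lemma open_diff_gr: "open {y::nat\<Rightarrow>real. y i - y j > a}"
  by (intro open_Collect_less continuous_intros continuous_on_product_coordinates)

lemma cl_convex:
  assumes "y \<in> cl B n x" "z \<in> cl B n x" "0 \<le> t" "t \<le> 1"
  shows "(\<lambda>i. (1 - t) * y i + t * z i) \<in> cl B n x"
proof -
  have yS: "y \<in> Sp B n" and zS: "z \<in> Sp B n" and sy: "same B n x y" and sz: "same B n x z"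
    using assms by (auto simp: cl_def)
  have key: "((1 - t) * y i + t * z i) - ((1 - t) * y j + t * z j) < a \<longleftrightarrow> y i - y j < a"
    "((1 - t) * y i + t * z i) - ((1 - t) * y j + t * z j) \<noteq> a"
    if "i < n" "j < n" "i \<noteq> j" "a \<in> B" for i j a
  proof -
    have e: "((1 - t) * y i + t * z i) - ((1 - t) * y j + t * z j) = (1-t) * (y i - y j) + t * (z i - z j)"
      by (simp add: algebra_simps)
    have s: "(y i - y j < a) = (z i - z j < a)" using sy sz that unfolding same_def by auto
    have ny: "y i - y j \<noteq> a" and nz: "z i - z j \<noteq> a" using yS zS that by (auto simp: Sp_iff)
    show "((1 - t) * y i + t * z i) - ((1 - t) * y j + t * z j) < a \<longleftrightarrow> y i - y j < a"
      "((1 - t) * y i + t * z i) - ((1 - t) * y j + t * z j) \<noteq> a"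
    proof -
      consider "y i - y j < a" "z i - z j < a" | "y i - y j > a" "z i - z j > a"
        using s ny nz by linarith
      then have "(1-t) * (y i - y j) + t * (z i - z j) < a \<and> y i - y j < a \<or>
                 (1-t) * (y i - y j) + t * (z i - z j) > a \<and> \<not> y i - y j < a"
      proof cases
        case 1
        have "(1-t) * (y i - y j) \<le> (1-t) * a" using 1 assms(4) by (intro mult_left_mono) auto
        moreover have "t * (z i - z j) \<le> t * a" using 1 assms(3) by (intro mult_left_mono) auto
        moreover have "(1-t) * (y i - y j) < (1-t) * a \<or> t * (z i - z j) < t * a"
          using 1 assms(3,4) by (cases "t = 1") auto
        ultimately show ?thesis using 1 by (auto simp: algebra_simps)
      next
        case 2
        have "(1-t) * (y i - y j) \<ge> (1-t) * a" using 2 assms(4) by (intro mult_left_mono) auto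
        moreover have "t * (z i - z j) \<ge> t * a" using 2 assms(3) by (intro mult_left_mono) auto
        moreover have "(1-t) * (y i - y j) > (1-t) * a \<or> t * (z i - z j) > t * a"
          using 2 assms(3,4) by (cases "t = 1") auto
        ultimately show ?thesis using 2 by (auto simp: algebra_simps)
      qed
      then show "((1 - t) * y i + t * z i) - ((1 - t) * y j + t * z j) < a \<longleftrightarrow> y i - y j < a"
        "((1 - t) * y i + t * z i) - ((1 - t) * y j + t * z j) \<noteq> a" unfolding e by auto
    qed
  qed
  have "(\<lambda>i. (1 - t) * y i + t * z i) \<in> Rn n" using yS zS by (auto simp: Sp_iff Rn_def)
  moreover have "same B n x (\<lambda>i. (1 - t) * y i + t * z i)"
    unfolding same_def
  proof (intro allI impI ballI)
    fix i j a assume "i < n" "j < n" "a \<in> B"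
    show "(x i - x j < a) = ((1 - t) * y i + t * z i - ((1 - t) * y j + t * z j) < a)"
    proof (cases "i = j")
      case True then show ?thesis by simp
    next
      case False then show ?thesis using key[OF \<open>i<n\<close> \<open>j<n\<close> False \<open>a\<in>B\<close>] sy \<open>i<n\<close> \<open>j<n\<close> \<open>a\<in>B\<close>
        unfolding same_def by auto
    qed
  qed
  moreover have "\<forall>i<n. \<forall>j<n. i \<noteq> j \<longrightarrow> (1 - t) * y i + t * z i - ((1 - t) * y j + t * z j) \<notin> B"
    using key(2) by blast
  ultimately show ?thesis unfolding cl_def Sp_iff by blast
qed

lemma cl_connected: "connected (cl B n x)"
proof -
  have "path_connected (cl B n x)"
    unfolding path_connected_def
  proof (intro ballI)
    fix y z assume y: "y \<in> cl B n x" and z: "z \<in> cl B n x"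
    define g where "g = (\<lambda>t::real. (\<lambda>i. (1 - t) * y i + t * z i))"
    have "path g" unfolding path_def g_def
      by (intro continuous_on_coordinatewise_then_product continuous_intros)
    moreover have "path_image g \<subseteq> cl B n x"
      unfolding path_image_def g_def using cl_convex[OF y z] by auto
    moreover have "pathstart g = y" "pathfinish g = z" unfolding pathstart_def pathfinish_def g_def by auto
    ultimately show "\<exists>g. path g \<and> path_image g \<subseteq> cl B n x \<and> pathstart g = y \<and> pathfinish g = z" by blast
  qed
  then show ?thesis by (rule path_connected_imp_connected)
qed

lemma cl_self: "x \<in> Sp B n \<Longrightarrow> x \<in> cl B n x"
  by (auto simp: cl_def same_def)

lemma component_eq_cl:
  assumes fin: "finite B" and x: "x \<in> Sp B n"
  shows "connected_component_set (Sp B n) x = cl B n x"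
proof
  show "cl B n x \<subseteq> connected_component_set (Sp B n) x"
    by (intro connected_component_maximal cl_self x cl_connected) (auto simp: cl_def)
next
  define Tr where "Tr = {(i,j,a). i < n \<and> j < n \<and> i \<noteq> j \<and> a \<in> B}"
  have finTr: "finite Tr"
  proof -
    have "Tr \<subseteq> {..<n} \<times> {..<n} \<times> B" unfolding Tr_def by auto
    then show ?thesis by (rule finite_subset) (use fin in auto)
  qed
  define P where "P = (\<lambda>(i,j,a). if x i - x j < a then {y::nat\<Rightarrow>real. y i - y j < a} else {y. y i - y j > a})"
  define Q where "Q = (\<lambda>(i,j,a). if x i - x j < a then {y::nat\<Rightarrow>real. y i - y j > a} else {y. y i - y j < a})"
  define O1 where "O1 = \<Inter>(P ` Tr)"
  define O2 where "O2 = \<Union>(Q ` Tr)"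
  have PQ: "P t \<inter> Q t = {}" for t
    by (cases t) (auto simp: P_def Q_def)
  have "open O1" unfolding O1_def using finTr
    by (intro open_Inter) (auto simp: P_def open_diff_less open_diff_gr)
  moreover have "open O2" unfolding O2_def
    by (intro open_Union) (auto simp: Q_def open_diff_less open_diff_gr)
  moreover have "O1 \<inter> O2 = {}" unfolding O1_def O2_def using PQ by blast
  moreover have "Sp B n \<subseteq> O1 \<union> O2"
  proof
    fix y assume y: "y \<in> Sp B n"
    show "y \<in> O1 \<union> O2"
    proof (cases "y \<in> O2")
      case False
      have "y \<in> P t" if "t \<in> Tr" for t
      proof -
        obtain i j a where t: "t = (i,j,a)" by (cases t) auto
        have ij: "i < n" "j < n" "i \<noteq> j" "a \<in> B" using that t by (auto simp: Tr_def)
        have "y \<notin> Q t" using \<open>y \<notin> O2\<close> that unfolding O2_def by auto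
        moreover have "y i - y j \<noteq> a" using y ij by (auto simp: Sp_iff)
        ultimately show ?thesis using t by (auto simp: P_def Q_def split: if_splits)
      qed
      then show ?thesis unfolding O1_def by auto
    qed auto
  qed
  moreover have "O1 \<inter> Sp B n \<subseteq> cl B n x"
  proof
    fix y assume y: "y \<in> O1 \<inter> Sp B n"
    have "same B n x y" unfolding same_def
    proof (intro allI impI ballI)
      fix i j a assume ij: "i < n" "j < n" "a \<in> B"
      show "(x i - x j < a) = (y i - y j < a)"
      proof (cases "i = j")
        case False
        then have "(i,j,a) \<in> Tr" using ij by (auto simp: Tr_def)
        then have "y \<in> P (i,j,a)" using y unfolding O1_def by blast
        then show ?thesis by (auto simp: P_def split: if_splits)
      qed simp
    qed
    then show "y \<in> cl B n x" using y by (auto simp: cl_def)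
  qed
  moreover have "x \<in> O1"
  proof -
    have "x \<in> P t" if "t \<in> Tr" for t
    proof -
      obtain i j a where t: "t = (i,j,a)" by (cases t) auto
      have ij: "i < n" "j < n" "i \<noteq> j" "a \<in> B" using that t by (auto simp: Tr_def)
      have "x i - x j \<noteq> a" using x ij by (auto simp: Sp_iff)
      then show ?thesis using t by (auto simp: P_def)
    qed
    then show ?thesis unfolding O1_def by blast
  qed
  ultimately show "connected_component_set (Sp B n) x \<subseteq> cl B n x"
  proof -
    assume a: "open O1" "open O2" "O1 \<inter> O2 = {}" "Sp B n \<subseteq> O1 \<union> O2" "O1 \<inter> Sp B n \<subseteq> cl B n x" "x \<in> O1"
    let ?C = "connected_component_set (Sp B n) x"
    have C: "connected ?C" "?C \<subseteq> Sp B n" "x \<in> ?C"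
      using connected_connected_component connected_component_subset x
      by (auto simp: connected_component_refl_eq)
    have "?C \<inter> O2 = {}"
      using connectedD[OF C(1) a(1) a(2)] a(3,4,6) C(2,3) by blast
    then show ?thesis using a(4,5) C(2) by blast
  qed
qed

definition cuts :: "real \<Rightarrow> nat \<Rightarrow> (nat \<Rightarrow> real) \<Rightarrow> nat set set" where
  "cuts c n x = {T. T \<subseteq> {..<n} \<and> (\<forall>i\<in>T. \<forall>j\<in>{..<n}-T. c < x j - x i)}"

definition chainS :: "'a set set \<Rightarrow> bool" where
  "chainS C \<longleftrightarrow> (\<forall>U\<in>C. \<forall>V\<in>C. U \<subseteq> V \<or> V \<subseteq> U)"

definition rk :: "'a set set \<Rightarrow> 'a set \<Rightarrow> nat" where
  "rk C U = card {V\<in>C. V \<subset> U}"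

lemma cuts_finite: "finite (cuts c n x)"
  by (rule finite_subset[of _ "Pow {..<n}"]) (auto simp: cuts_def)

lemma cuts_empty: "{} \<in> cuts c n x" and cuts_full: "{..<n} \<in> cuts c n x"
  by (auto simp: cuts_def)

lemma cuts_chain: assumes "0 \<le> c" shows "chainS (cuts c n x)"
  unfolding chainS_def
proof (intro ballI)
  fix U V assume U: "U \<in> cuts c n x" and V: "V \<in> cuts c n x"
  show "U \<subseteq> V \<or> V \<subseteq> U"
  proof (rule ccontr)
    assume "\<not> (U \<subseteq> V \<or> V \<subseteq> U)"
    then obtain i j where i: "i \<in> U" "i \<notin> V" and j: "j \<in> V" "j \<notin> U" by blast
    have "i < n" "j < n" using i j U V by (auto simp: cuts_def)
    then have "c < x j - x i" "c < x i - x j" using U V i j by (auto simp: cuts_def)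
    then show False using assms by linarith
  qed
qed

lemma rk_less: assumes "finite C" "U \<in> C" "V \<in> C" "U \<subset> V" shows "rk C U < rk C V"
  unfolding rk_def
  by (rule psubset_card_mono) (use assms in auto)

lemma rk_lt_card: assumes "finite C" "U \<in> C" shows "rk C U < card C"
proof -
  have "{V\<in>C. V \<subset> U} \<subset> C" using assms by auto
  then show ?thesis unfolding rk_def using assms(1) by (rule psubset_card_mono[rotated])
qed

lemma rk_le_iff: assumes "finite C" "chainS C" "U \<in> C" "V \<in> C"
  shows "U \<subseteq> V \<longleftrightarrow> rk C U \<le> rk C V"
proof
  assume "U \<subseteq> V" then show "rk C U \<le> rk C V"
  proof (cases "U = V")
    case False
    then have "U \<subset> V" using \<open>U \<subseteq> V\<close> by blast
    then show ?thesis using rk_less[OF assms(1,3,4)] by simp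
  qed simp
next
  assume a: "rk C U \<le> rk C V"
  show "U \<subseteq> V"
  proof (rule ccontr)
    assume "\<not> U \<subseteq> V"
    then have "V \<subset> U" using assms(2-4) unfolding chainS_def by blast
    then show False using rk_less[OF assms(1,4,3)] a by simp
  qed
qed

lemma rk_inj: assumes "finite C" "chainS C" shows "inj_on (rk C) C"
  by (rule inj_onI) (metis assms rk_le_iff order.eq_iff order_refl subset_antisym)

lemma rk_image: assumes "finite C" "chainS C" shows "rk C ` C = {..<card C}"
proof -
  have "rk C ` C \<subseteq> {..<card C}" using rk_lt_card[OF assms(1)] by auto
  moreover have "card (rk C ` C) = card {..<card C}"
    using card_image[OF rk_inj[OF assms]] by simp
  ultimately show ?thesis by (intro card_subset_eq) auto
qed

lemma rk_exists: assumes "finite C" "chainS C" "m < card C" shows "\<exists>!U. U \<in> C \<and> rk C U = m"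
proof -
  have "m \<in> rk C ` C" using rk_image[OF assms(1,2)] assms(3) by auto
  then obtain U where "U \<in> C" "rk C U = m" by auto
  moreover have "V = U" if "V \<in> C" "rk C V = m" for V
    using rk_inj[OF assms(1,2)] that \<open>U \<in> C\<close> \<open>rk C U = m\<close> by (auto dest: inj_onD)
  ultimately show ?thesis by blast
qed

lemma width_aux:
  assumes c: "0 \<le> c" and q: "q < n" and r: "r < n" and qr: "y q \<le> y r"
    and nosep: "\<forall>U\<in>cuts c n y. (q \<in> U \<longleftrightarrow> r \<in> U)"
  shows "y r - y q \<le> c * n"
proof -
  define V where "V = y ` {p. p < n \<and> y q \<le> y p \<and> y p \<le> y r}"
  have finV: "finite V" unfolding V_def by auto
  have cardV: "card V \<le> n"
  proof -
    have "card V \<le> card {p. p < n \<and> y q \<le> y p \<and> y p \<le> y r}" unfolding V_def by (rule card_image_le) auto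
    also have "\<dots> \<le> card {..<n}" by (rule card_mono) auto
    finally show ?thesis by simp
  qed
  have main: "\<forall>v. v \<in> V \<longrightarrow> card {u\<in>V. u < v} = m \<longrightarrow> v - y q \<le> c * m" for m
  proof (induction m rule: less_induct)
    case (less m)
    show ?case
    proof (intro allI impI)
      fix v assume v: "v \<in> V" and m: "card {u\<in>V. u < v} = m"
      have vq: "y q \<le> v" "v \<le> y r" using v unfolding V_def by auto
      show "v - y q \<le> c * m"
      proof (cases "v = y q")
        case True then show ?thesis using c by simp
      next
        case False
        define L where "L = {u\<in>V. u < v}"
        have yqL: "y q \<in> L" unfolding L_def V_def using False vq q qr by auto
        have finL: "finite L" using finV unfolding L_def by auto
        define u where "u = Max L"
        have uL: "u \<in> L" unfolding u_def using finL yqL by (intro Max_in) auto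
        have uge: "y q \<le> u" unfolding u_def using finL yqL by (intro Max_ge)
        have umax: "w \<le> u" if "w \<in> L" for w unfolding u_def using finL that by (intro Max_ge)
        have uV: "u \<in> V" "u < v" using uL unfolding L_def by auto
        have gap: "v - u \<le> c"
        proof (rule ccontr)
          assume "\<not> v - u \<le> c"
          define U where "U = {p. p < n \<and> y p \<le> u}"
          have "U \<in> cuts c n y" unfolding cuts_def
          proof (intro CollectI conjI ballI)
            show "U \<subseteq> {..<n}" unfolding U_def by auto
            fix i j assume i: "i \<in> U" and j: "j \<in> {..<n} - U"
            have yj: "y j > u" "j < n" using j unfolding U_def by auto
            have "y j \<ge> v"
            proof (rule ccontr)
              assume "\<not> y j \<ge> v"
              then have "y j \<in> L" unfolding L_def V_def using yj uge vq by auto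
              then show False using umax yj by fastforce
            qed
            then show "c < y j - y i" using i \<open>\<not> v - u \<le> c\<close> unfolding U_def by auto
          qed
          moreover have "q \<in> U" "r \<notin> U" unfolding U_def using q uge vq uV by auto
          ultimately show False using nosep by blast
        qed
        have sub: "{w\<in>V. w < u} \<subset> L" unfolding L_def using uV by auto
        have lt: "card {w\<in>V. w < u} < m" using psubset_card_mono[OF finL sub] m unfolding L_def by simp
        have "u - y q \<le> c * card {w\<in>V. w < u}" using less.IH[OF lt] uV by blast
        also have "\<dots> \<le> c * (m - 1)" using lt c by (intro mult_left_mono) auto
        finally have "v - y q \<le> c + c * (real m - 1)" using gap lt by (simp add: of_nat_diff)
        then show ?thesis by (simp add: algebra_simps)
      qed
    qed
  qed
  have rV: "y r \<in> V" unfolding V_def using r qr by auto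
  have "y r - y q \<le> c * card {u\<in>V. u < y r}" using main rV by blast
  also have "\<dots> \<le> c * n"
  proof -
    have "card {u\<in>V. u < y r} \<le> card V" using finV by (intro card_mono) auto
    then show ?thesis using cardV c by (intro mult_left_mono) auto
  qed
  finally show ?thesis .
qed

lemma width:
  assumes c: "0 \<le> c" and q: "q < n" and r: "r < n"
    and nosep: "\<forall>U\<in>cuts c n y. (q \<in> U \<longleftrightarrow> r \<in> U)"
  shows "\<bar>y r - y q\<bar> \<le> c * n"
proof (cases "y q \<le> y r")
  case True then show ?thesis using width_aux[OF c q r True nosep] by simp
next
  case False then show ?thesis using width_aux[OF c r q _ ] nosep by force
qed

lemma homog:
  fixes g :: "nat \<Rightarrow> nat \<Rightarrow> real"
  assumes "finite K" "l < card K"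
  shows "\<exists>c. (\<exists>m\<in>K. c m \<noteq> 0) \<and> (\<forall>j<l. (\<Sum>m\<in>K. c m * g m j) = 0)"
  using assms
proof (induction l arbitrary: K g)
  case 0
  then have "K \<noteq> {}" by auto
  then show ?case by (intro exI[of _ "\<lambda>_. 1"]) auto
next
  case (Suc l)
  show ?case
  proof (cases "\<forall>m\<in>K. g m l = 0")
    case True
    obtain c where c: "\<exists>m\<in>K. c m \<noteq> 0" "\<forall>j<l. (\<Sum>m\<in>K. c m * g m j) = 0"
      using Suc.IH[of K g] Suc.prems by auto
    have "(\<Sum>m\<in>K. c m * g m j) = 0" if "j < Suc l" for j
    proof (cases "j = l")
      case True then show ?thesis using \<open>\<forall>m\<in>K. g m l = 0\<close> by simp
    next
      case False then show ?thesis using c(2) that by simp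
    qed
    then show ?thesis using c(1) by blast
  next
    case False
    then obtain m0 where m0: "m0 \<in> K" "g m0 l \<noteq> 0" by blast
    define K' where "K' = K - {m0}"
    have finK': "finite K'" using Suc.prems unfolding K'_def by auto
    have cK': "l < card K'" using Suc.prems m0 unfolding K'_def by auto
    define g' where "g' = (\<lambda>m j. g m j - (g m l / g m0 l) * g m0 j)"
    obtain c' where c': "\<exists>m\<in>K'. c' m \<noteq> 0" "\<forall>j<l. (\<Sum>m\<in>K'. c' m * g' m j) = 0"
      using Suc.IH[OF finK' cK', of g'] by blast
    define S where "S = (\<Sum>m\<in>K'. c' m * g m l)"
    define lam where "lam = - S / g m0 l"
    define c where "c = (\<lambda>m. if m = m0 then lam else c' m)"
    have split: "(\<Sum>m\<in>K. c m * g m j) = lam * g m0 j + (\<Sum>m\<in>K'. c' m * g m j)" for j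
    proof -
      have "(\<Sum>m\<in>K. c m * g m j) = c m0 * g m0 j + (\<Sum>m\<in>K'. c m * g m j)"
        unfolding K'_def using Suc.prems(1) m0(1) by (rule sum.remove)
      also have "(\<Sum>m\<in>K'. c m * g m j) = (\<Sum>m\<in>K'. c' m * g m j)"
        by (rule sum.cong) (auto simp: c_def K'_def)
      finally show ?thesis by (simp add: c_def)
    qed
    have "(\<Sum>m\<in>K. c m * g m j) = 0" if "j < Suc l" for j
    proof (cases "j = l")
      case True then show ?thesis using split[of l] m0(2) by (simp add: lam_def S_def)
    next
      case False
      then have jl: "j < l" using that by simp
      have "(\<Sum>m\<in>K'. c' m * g' m j) = (\<Sum>m\<in>K'. c' m * g m j) - (g m0 j / g m0 l) * S"
        unfolding g'_def S_def by (simp add: algebra_simps sum_subtractf sum_distrib_left)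
      then have "(\<Sum>m\<in>K'. c' m * g m j) = (g m0 j / g m0 l) * S" using c'(2) jl by simp
      then show ?thesis using split[of j] by (simp add: lam_def)
    qed
    moreover have "\<exists>m\<in>K. c m \<noteq> 0"
    proof -
      obtain m where "m \<in> K'" "c' m \<noteq> 0" using c'(1) by blast
      then show ?thesis unfolding c_def K'_def by (intro bexI[of _ m]) auto
    qed
    ultimately show ?thesis by blast
  qed
qed

lemma abs_le_enorm: "i < n \<Longrightarrow> \<bar>d i\<bar> \<le> enorm n d"
proof -
  assume i: "i < n"
  have "(d i)^2 \<le> (\<Sum>j<n. (d j)^2)" using i by (intro member_le_sum) auto
  then have "sqrt ((d i)^2) \<le> enorm n d" unfolding enorm_def by (rule real_sqrt_le_mono)
  then show ?thesis by simp
qed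

lemma inner_le_enorm:
  "\<bar>\<Sum>i<n. w i * d i\<bar> \<le> (\<Sum>i<n. \<bar>w i\<bar>) * enorm n d"
proof -
  have "\<bar>\<Sum>i<n. w i * d i\<bar> \<le> (\<Sum>i<n. \<bar>w i * d i\<bar>)" by (rule sum_abs)
  also have "\<dots> \<le> (\<Sum>i<n. \<bar>w i\<bar> * enorm n d)"
    by (intro sum_mono) (auto simp: abs_mult intro: mult_left_mono abs_le_enorm)
  finally show ?thesis by (simp add: sum_distrib_right)
qed

lemma enorm_le:
  assumes "\<And>i. i < n \<Longrightarrow> \<bar>d i\<bar> \<le> K"
  shows "enorm n d \<le> K * sqrt n"
proof -
  have K: "0 \<le> K" if "n > 0" using assms[of 0] that by auto
  have "(\<Sum>i<n. (d i)^2) \<le> (\<Sum>i<n. K^2)"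
    by (intro sum_mono) (metis abs_ge_zero assms lessThan_iff power2_abs power_mono)
  then have "enorm n d \<le> sqrt (n * K^2)" unfolding enorm_def by (intro real_sqrt_le_mono) simp
  also have "\<dots> = \<bar>K\<bar> * sqrt n" by (simp add: real_sqrt_mult)
  also have "\<dots> = K * sqrt n" using K by (cases "n = 0") auto
  finally show ?thesis .
qed

locale arr =
  fixes B :: "real set" and c :: real
  assumes finB: "finite B" and cB: "c \<in> B" and cpos: "0 < c"
    and Brange: "\<forall>a\<in>B. 0 \<le> a \<and> a \<le> c"
begin

lemma cuts_same:
  assumes x: "x \<in> Sp B n" and y: "y \<in> cl B n x"
  shows "cuts c n y = cuts c n x"
proof -
  have yS: "y \<in> Sp B n" and s: "same B n x y" using y by (auto simp: cl_def)
  have eq: "(c < y j - y i) = (c < x j - x i)" if "i < n" "j < n" "i \<noteq> j" for i j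
  proof -
    have "x j - x i \<noteq> c" "y j - y i \<noteq> c" using x yS that cB by (auto simp: Sp_iff)
    moreover have "(x j - x i < c) = (y j - y i < c)" using s that cB unfolding same_def by auto
    ultimately show ?thesis by linarith
  qed
  show ?thesis unfolding cuts_def
  proof (intro Collect_cong conj_cong refl)
    fix T assume T: "T \<subseteq> {..<n}"
    show "(\<forall>i\<in>T. \<forall>j\<in>{..<n} - T. c < y j - y i) = (\<forall>i\<in>T. \<forall>j\<in>{..<n} - T. c < x j - x i)"
    proof (intro ball_cong refl)
      fix i j assume "i \<in> T" "j \<in> {..<n} - T"
      then show "(c < y j - y i) = (c < x j - x i)" using T by (intro eq) auto
    qed
  qed
qed

definition kk :: "nat \<Rightarrow> (nat \<Rightarrow> real) \<Rightarrow> nat" where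
  "kk n x = card (cuts c n x) - 1"
definition UU :: "nat \<Rightarrow> (nat \<Rightarrow> real) \<Rightarrow> nat \<Rightarrow> nat set" where
  "UU n x m = (THE U. U \<in> cuts c n x \<and> rk (cuts c n x) U = m)"
definition Bl :: "nat \<Rightarrow> (nat \<Rightarrow> real) \<Rightarrow> nat \<Rightarrow> nat set" where
  "Bl n x m = UU n x (Suc m) - UU n x m"

lemma chainC: "chainS (cuts c n x)" using cuts_chain cpos by simp

lemma cardC: "card (cuts c n x) = Suc (kk n x)"
proof -
  have "card (cuts c n x) \<noteq> 0" using cuts_finite cuts_empty by (metis card_0_eq empty_iff)
  then show ?thesis unfolding kk_def by simp
qed

lemma UU_props: assumes "m \<le> kk n x"
  shows "UU n x m \<in> cuts c n x" "rk (cuts c n x) (UU n x m) = m"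
proof -
  have "\<exists>!U. U \<in> cuts c n x \<and> rk (cuts c n x) U = m"
    using rk_exists[OF cuts_finite chainC] assms cardC by simp
  then have "UU n x m \<in> cuts c n x \<and> rk (cuts c n x) (UU n x m) = m"
    unfolding UU_def by (rule theI')
  then show "UU n x m \<in> cuts c n x" "rk (cuts c n x) (UU n x m) = m" by auto
qed

lemma UU_eq: assumes "V \<in> cuts c n x" shows "UU n x (rk (cuts c n x) V) = V"
proof -
  have r: "rk (cuts c n x) V \<le> kk n x" using rk_lt_card[OF cuts_finite assms] cardC by simp
  show ?thesis using UU_props[OF r] rk_inj[OF cuts_finite chainC] assms
    by (auto dest: inj_onD)
qed

lemma rk_bound: assumes "V \<in> cuts c n x" shows "rk (cuts c n x) V \<le> kk n x"
  using rk_lt_card[OF cuts_finite assms] cardC by simp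

lemma UU_0: "UU n x 0 = {}"
proof -
  have "rk (cuts c n x) {} = 0" unfolding rk_def by simp
  then show ?thesis using UU_eq[OF cuts_empty[where c=c and n=n and x=x]] by simp
qed

lemma UU_k: "UU n x (kk n x) = {..<n}"
proof -
  have "{V \<in> cuts c n x. V \<subset> {..<n}} = cuts c n x - {{..<n}}"
    by (auto simp: cuts_def)
  then have "rk (cuts c n x) {..<n} = kk n x"
    unfolding rk_def using cuts_full cuts_finite cardC by (simp add: card_Diff_singleton)
  then show ?thesis using UU_eq[OF cuts_full[where c=c and n=n and x=x]] by simp
qed

lemma UU_mono: assumes "m \<le> m'" "m' \<le> kk n x" shows "UU n x m \<subseteq> UU n x m'"
  using rk_le_iff[OF cuts_finite chainC UU_props(1) UU_props(1), of m n x m'] UU_props(2) assms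
  by simp

lemma UU_strict: assumes "m < m'" "m' \<le> kk n x" shows "UU n x m \<subset> UU n x m'"
proof -
  have "UU n x m \<noteq> UU n x m'" using UU_props(2)[of m n x] UU_props(2)[of m' n x] assms by force
  then show ?thesis using UU_mono[of m m' n x] assms by auto
qed

lemma UU_sub: "m \<le> kk n x \<Longrightarrow> UU n x m \<subseteq> {..<n}"
  using UU_props(1) by (auto simp: cuts_def)

lemma Bl_sub: "m < kk n x \<Longrightarrow> Bl n x m \<subseteq> {..<n}"
  unfolding Bl_def using UU_sub[of "Suc m" n x] by auto

lemma Bl_ne: "m < kk n x \<Longrightarrow> Bl n x m \<noteq> {}"
  unfolding Bl_def using UU_strict[of m "Suc m" n x] by auto

lemma Bl_disj: assumes "m < m'" "m' < kk n x" shows "Bl n x m \<inter> Bl n x m' = {}"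
  unfolding Bl_def using UU_mono[of "Suc m" m' n x] assms by auto

lemma Bl_disj': assumes "i \<in> Bl n x m" "i \<in> Bl n x m'" "m < kk n x" "m' < kk n x" shows "m = m'"
  using Bl_disj[of m m' n x] Bl_disj[of m' m n x] assms by (cases m m' rule: linorder_cases) auto

lemma Bl_cover: assumes "i < n" shows "\<exists>m<kk n x. i \<in> Bl n x m"
proof -
  have ex: "\<exists>m. i \<in> UU n x m \<and> m \<le> kk n x" using UU_k assms by auto
  define m' where "m' = (LEAST m. i \<in> UU n x m \<and> m \<le> kk n x)"
  have m': "i \<in> UU n x m'" "m' \<le> kk n x" using LeastI_ex[OF ex] unfolding m'_def by auto
  have "m' \<noteq> 0" using m' UU_0[of n x] by (metis empty_iff)
  then obtain m where m: "m' = Suc m" by (cases m') auto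
  have "i \<notin> UU n x m" using not_less_Least[of m "\<lambda>m. i \<in> UU n x m \<and> m \<le> kk n x"] m m' unfolding m'_def
    by auto
  then show ?thesis using m m' unfolding Bl_def by (intro exI[of _ m]) auto
qed

lemma Bl_cut: assumes "V \<in> cuts c n x" "m < kk n x"
  shows "Bl n x m \<subseteq> V \<or> Bl n x m \<inter> V = {}"
proof -
  define r where "r = rk (cuts c n x) V"
  have V: "V = UU n x r" "r \<le> kk n x" using UU_eq[OF assms(1)] rk_bound[OF assms(1)] unfolding r_def by auto
  show ?thesis
  proof (cases "r \<le> m")
    case True
    then have "V \<subseteq> UU n x m" using V UU_mono[of r m n x] assms(2) by auto
    then show ?thesis unfolding Bl_def by auto
  next
    case False
    then have "UU n x (Suc m) \<subseteq> V" using V UU_mono[of "Suc m" r n x] by auto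
    then show ?thesis unfolding Bl_def by auto
  qed
qed

lemma Bl_split: assumes "m < kk n x"
  shows "{..<n} - UU n x m = Bl n x m \<union> ({..<n} - UU n x (Suc m))"
    "Bl n x m \<inter> ({..<n} - UU n x (Suc m)) = {}"
  using UU_mono[of m "Suc m" n x] assms UU_sub[of "Suc m" n x] unfolding Bl_def by auto

end

context arr begin

lemma enorm_nonneg: "0 \<le> enorm n d" unfolding enorm_def by (simp add: sum_nonneg)

definition vv :: "nat \<Rightarrow> (nat \<Rightarrow> real) \<Rightarrow> nat \<Rightarrow> nat \<Rightarrow> real" where
  "vv n x m = (\<lambda>i. if i \<in> Bl n x m then 1 else 0)"

lemma sum_delta_Bl:
  assumes "i \<in> Bl n x m" "m < kk n x"
  shows "(\<Sum>m'<kk n x. f m' * vv n x m' i) = f m"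
proof -
  have "(\<Sum>m'<kk n x. f m' * vv n x m' i) = (\<Sum>m'<kk n x. if m' = m then f m else 0)"
    by (rule sum.cong) (use assms Bl_disj' in \<open>auto simp: vv_def\<close>)
  also have "\<dots> = f m" using assms(2) by simp
  finally show ?thesis .
qed

lemma level_upper:
  assumes x: "x \<in> Sp B n"
  shows "\<exists>W r. lin_subspace_dim n (kk n x) W \<and> r > 0 \<and>
      cl B n x \<subseteq> {y. (INF y'\<in>W. enorm n (\<lambda>i. y i - y' i)) \<le> r}"
proof -
  define k where "k = kk n x"
  define W where "W = {(\<lambda>i. \<Sum>j<k. cc j * vv n x j i) | cc. True}"
  have "lin_subspace_dim n k W"
    unfolding lin_subspace_dim_def
  proof (intro exI[of _ "vv n x"] conjI)
    show "\<forall>j<k. vv n x j \<in> Rn n" using Bl_sub unfolding k_def vv_def Rn_def by fastforce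
    show "\<forall>cc. (\<lambda>i. \<Sum>j<k. cc j * vv n x j i) = (\<lambda>_. 0) \<longrightarrow> (\<forall>j<k. cc j = 0)"
    proof (intro allI impI)
      fix cc j assume h: "(\<lambda>i. \<Sum>j<k. cc j * vv n x j i) = (\<lambda>_. 0)" and j: "j < k"
      obtain i where i: "i \<in> Bl n x j" using Bl_ne j unfolding k_def by blast
      have "(\<Sum>j<k. cc j * vv n x j i) = 0" using h by meson
      then show "cc j = 0" using sum_delta_Bl[OF i] j unfolding k_def by simp
    qed
  qed (simp add: W_def)
  moreover have "cl B n x \<subseteq> {y. (INF y'\<in>W. enorm n (\<lambda>i. y i - y' i)) \<le> c * n * sqrt n}"
  proof
    fix y assume y: "y \<in> cl B n x"
    have cy: "cuts c n y = cuts c n x" by (rule cuts_same[OF x y])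
    define rep where "rep = (\<lambda>m. SOME i. i \<in> Bl n x m)"
    have rep: "rep m \<in> Bl n x m" if "m < k" for m
      unfolding rep_def using Bl_ne[of m n x] that unfolding k_def by (auto intro: someI_ex)
    define p where "p = (\<lambda>i. \<Sum>m<k. y (rep m) * vv n x m i)"
    have pW: "p \<in> W" unfolding p_def W_def by (rule CollectI, rule exI[of _ "\<lambda>m. y (rep m)"]) simp
    have "\<bar>y i - p i\<bar> \<le> c * n" if i: "i < n" for i
    proof -
      obtain m where m: "m < k" "i \<in> Bl n x m" using Bl_cover[OF i] unfolding k_def by blast
      have pi: "p i = y (rep m)" unfolding p_def using sum_delta_Bl[OF m(2)] m(1) unfolding k_def by simp
      have rm: "rep m < n" using rep[OF m(1)] Bl_sub m(1) unfolding k_def by blast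
      have "\<forall>U\<in>cuts c n y. (rep m \<in> U \<longleftrightarrow> i \<in> U)"
        using Bl_cut[of _ n x m] m rep[OF m(1)] unfolding cy k_def by blast
      from width[OF _ rm i this] cpos show ?thesis using pi by simp
    qed
    then have "enorm n (\<lambda>i. y i - p i) \<le> c * n * sqrt n" by (rule enorm_le)
    moreover have "bdd_below ((\<lambda>y'. enorm n (\<lambda>i. y i - y' i)) ` W)"
      by (rule bdd_belowI[of _ 0]) (auto simp: enorm_nonneg)
    ultimately show "y \<in> {y. (INF y'\<in>W. enorm n (\<lambda>i. y i - y' i)) \<le> c * n * sqrt n}"
      using pW by (auto intro: cINF_lower2)
  qed
  then have "cl B n x \<subseteq> {y. (INF y'\<in>W. enorm n (\<lambda>i. y i - y' i)) \<le> c * n * sqrt n + 1}"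
    by auto
  moreover have "c * n * sqrt n + 1 > 0"
  proof -
    have "0 \<le> c * n * sqrt n" using cpos by simp
    then show ?thesis by linarith
  qed
  ultimately show ?thesis unfolding k_def by blast
qed

definition EE :: "nat \<Rightarrow> (nat \<Rightarrow> real) \<Rightarrow> nat \<Rightarrow> nat \<Rightarrow> real" where
  "EE n x m = (\<lambda>i. if i < n \<and> i \<notin> UU n x m then 1 else 0)"

lemma shift_in_cl:
  assumes x: "x \<in> Sp B n" and m: "m \<le> kk n x" and t: "0 \<le> t"
  shows "(\<lambda>i. x i + t * EE n x m i) \<in> cl B n x"
proof -
  define y where "y = (\<lambda>i. x i + t * EE n x m i)"
  have U: "UU n x m \<in> cuts c n x" using UU_props(1)[OF m] .
  have key: "(y i - y j \<notin> B) \<and> (\<forall>a\<in>B. (x i - x j < a) = (y i - y j < a))"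
    if ij: "i < n" "j < n" "i \<noteq> j" for i j
  proof -
    have xn: "x i - x j \<notin> B" using x ij by (auto simp: Sp_iff)
    consider "(i \<in> UU n x m) = (j \<in> UU n x m)" | "i \<notin> UU n x m" "j \<in> UU n x m" | "i \<in> UU n x m" "j \<notin> UU n x m"
      by blast
    then show ?thesis
    proof cases
      case 1
      then have "y i - y j = x i - x j" using ij unfolding y_def EE_def by auto
      then show ?thesis using xn by simp
    next
      case 2
      then have "c < x i - x j" using U ij unfolding cuts_def by auto
      moreover have "y i - y j = x i - x j + t" using 2 ij unfolding y_def EE_def by auto
      ultimately have "c < y i - y j" using t by linarith
      then show ?thesis using \<open>c < x i - x j\<close> Brange by force
    next
      case 3
      then have "c < x j - x i" using U ij unfolding cuts_def by auto
      moreover have "y i - y j = x i - x j - t" using 3 ij unfolding y_def EE_def by auto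
      ultimately have "y i - y j < - c" using t by linarith
      then show ?thesis using \<open>c < x j - x i\<close> Brange cpos by force
    qed
  qed
  have "y \<in> Rn n" using x unfolding y_def EE_def Sp_iff Rn_def by auto
  moreover have "same B n x y" unfolding same_def
  proof (intro allI impI ballI)
    fix i j a assume "i < n" "j < n" "a \<in> B"
    then show "(x i - x j < a) = (y i - y j < a)" using key by (cases "i = j") auto
  qed
  ultimately show ?thesis using key unfolding cl_def Sp_iff y_def by blast
qed

lemma level_lower:
  assumes x: "x \<in> Sp B n" and l: "l < kk n x" and W: "lin_subspace_dim n l W" and r: "r > 0"
    and cov: "cl B n x \<subseteq> {y. (INF y'\<in>W. enorm n (\<lambda>i. y i - y' i)) \<le> r}"
  shows False
proof -
  define k where "k = kk n x"
  obtain v' :: "nat \<Rightarrow> nat \<Rightarrow> real" where Wd: "W = {(\<lambda>i. \<Sum>j<l. d j * v' j i) | d. True}"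
    using W unfolding lin_subspace_dim_def by blast
  define g where "g = (\<lambda>m j. \<Sum>i<n. vv n x m i * v' j i)"
  obtain cc where cc: "\<exists>m\<in>{..<k}. cc m \<noteq> 0" "\<forall>j<l. (\<Sum>m\<in>{..<k}. cc m * g m j) = 0"
    using homog[of "{..<k}" l g] l unfolding k_def by auto
  define w where "w = (\<lambda>i. \<Sum>m<k. cc m * vv n x m i)"
  have wBl: "w i = cc m" if "i \<in> Bl n x m" "m < k" for i m
    unfolding w_def using sum_delta_Bl[OF that(1)] that(2) unfolding k_def by simp
  have wW: "(\<Sum>i<n. w i * y' i) = 0" if y'W: "y' \<in> W" for y'
  proof -
    obtain d where y': "y' = (\<lambda>i. \<Sum>j<l. d j * v' j i)" using y'W Wd by blast
    have inner: "(\<Sum>i<n. w i * v' j i) = (\<Sum>m<k. cc m * g m j)" for j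
      unfolding w_def g_def by (simp add: sum_distrib_left sum_distrib_right algebra_simps sum.swap[of _ "{..<n}"])
    have "(\<Sum>i<n. w i * y' i) = (\<Sum>j<l. d j * (\<Sum>i<n. w i * v' j i))"
      unfolding y' by (simp add: sum_distrib_left sum_distrib_right algebra_simps sum.swap[of _ "{..<n}"])
    also have "\<dots> = 0" using cc(2) inner by simp
    finally show ?thesis .
  qed
  define S where "S = (\<lambda>m. \<Sum>i\<in>{..<n} - UU n x m. w i)"
  have Sk: "S k = 0" unfolding S_def k_def UU_k by simp
  have Sstep: "S m = cc m * card (Bl n x m) + S (Suc m)" if m: "m < k" for m
  proof -
    have "S m = (\<Sum>i\<in>Bl n x m. w i) + S (Suc m)"
      unfolding S_def Bl_split(1)[OF m[unfolded k_def]]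
      by (rule sum.union_disjoint) (use Bl_split(2)[OF m[unfolded k_def]] Bl_sub[OF m[unfolded k_def]] in \<open>auto intro: finite_subset\<close>)
    also have "(\<Sum>i\<in>Bl n x m. w i) = (\<Sum>i\<in>Bl n x m. cc m)" using wBl m by simp
    finally show ?thesis by simp
  qed
  obtain m where m: "m < k" "S m \<noteq> 0"
  proof (rule ccontr)
    assume "\<not> thesis"
    then have allz: "\<forall>m<k. S m = 0" using that by blast
    have "cc m = 0" if "m < k" for m
    proof -
      have "S (Suc m) = 0" using allz Sk that by (cases "Suc m = k") auto
      then have "cc m * card (Bl n x m) = 0" using Sstep[OF that] allz that by simp
      moreover have "card (Bl n x m) \<noteq> 0"
        using Bl_ne[of m n x] Bl_sub[of m n x] that finite_subset[OF _ finite_lessThan] unfolding k_def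
        by (metis card_eq_0_iff)
      ultimately show ?thesis by simp
    qed
    then show False using cc(1) by auto
  qed
  define s where "s = S m"
  define X0 where "X0 = (\<Sum>i<n. w i * x i)"
  define K where "K = (\<Sum>i<n. \<bar>w i\<bar>)"
  have K0: "0 \<le> K" unfolding K_def by (intro sum_nonneg) auto
  define t where "t = (K * (r + 1) + \<bar>X0\<bar> + 1) / \<bar>s\<bar>"
  have t0: "0 \<le> t" unfolding t_def using K0 r by (intro divide_nonneg_nonneg) auto
  have ts: "t * \<bar>s\<bar> = K * (r + 1) + \<bar>X0\<bar> + 1" unfolding t_def using m(2) s_def by simp
  define y where "y = (\<lambda>i. x i + t * EE n x m i)"
  have ycl: "y \<in> cl B n x" unfolding y_def using shift_in_cl[OF x _ t0, of m] m(1) unfolding k_def by simp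
  have Wne: "W \<noteq> {}" unfolding Wd by auto
  have bdd: "bdd_below ((\<lambda>y'. enorm n (\<lambda>i. y i - y' i)) ` W)"
    by (rule bdd_belowI[of _ 0]) (auto simp: enorm_nonneg)
  have "(INF y'\<in>W. enorm n (\<lambda>i. y i - y' i)) < r + 1" using cov ycl by force
  then obtain y' where y': "y' \<in> W" "enorm n (\<lambda>i. y i - y' i) < r + 1"
    using cINF_less_iff[OF Wne bdd] by blast
  have "\<bar>\<Sum>i<n. w i * (y i - y' i)\<bar> \<le> K * enorm n (\<lambda>i. y i - y' i)"
    using inner_le_enorm[where n=n and w=w and d="\<lambda>i. y i - y' i"] unfolding K_def by simp
  also have "\<dots> \<le> K * (r + 1)" using y'(2) K0 by (intro mult_left_mono) auto
  finally have b1: "\<bar>\<Sum>i<n. w i * (y i - y' i)\<bar> \<le> K * (r + 1)" .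
  have "(\<Sum>i<n. w i * (y i - y' i)) = (\<Sum>i<n. w i * y i) - (\<Sum>i<n. w i * y' i)"
    by (simp add: algebra_simps sum_subtractf)
  also have "\<dots> = (\<Sum>i<n. w i * y i)" using wW[OF y'(1)] by simp
  also have "(\<Sum>i<n. w i * y i) = X0 + t * s"
  proof -
    have "(\<Sum>i<n. w i * y i) = X0 + t * (\<Sum>i<n. w i * EE n x m i)"
      unfolding y_def X0_def by (simp add: algebra_simps sum.distrib sum_distrib_left)
    moreover have "(\<Sum>i<n. w i * EE n x m i) = s"
    proof -
      have "(\<Sum>i<n. w i * EE n x m i) = (\<Sum>i<n. if i \<in> - UU n x m then w i else 0)"
        by (rule sum.cong) (auto simp: EE_def)
      also have "\<dots> = (\<Sum>i\<in>{..<n} \<inter> - UU n x m. w i)" by (rule sum.inter_restrict[symmetric]) simp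
      also have "{..<n} \<inter> - UU n x m = {..<n} - UU n x m" by auto
      finally show ?thesis unfolding s_def S_def by simp
    qed
    ultimately show ?thesis by simp
  qed
  finally have "\<bar>X0 + t * s\<bar> \<le> K * (r + 1)" using b1 by simp
  moreover have "\<bar>t * s\<bar> = K * (r + 1) + \<bar>X0\<bar> + 1" using ts t0 by (simp add: abs_mult)
  ultimately show False by linarith
qed

lemma level_eq:
  assumes x: "x \<in> Sp B n"
  shows "level n (cl B n x) = kk n x"
  unfolding level_def
proof (rule Least_equality)
  show "\<exists>W r. lin_subspace_dim n (kk n x) W \<and> r > 0 \<and>
      cl B n x \<subseteq> {y. (INF y'\<in>W. enorm n (\<lambda>i. y i - y' i)) \<le> r}" by (rule level_upper[OF x])
next
  fix l assume "\<exists>W r. lin_subspace_dim n l W \<and> r > 0 \<and>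
      cl B n x \<subseteq> {y. (INF y'\<in>W. enorm n (\<lambda>i. y i - y' i)) \<le> r}"
  then show "kk n x \<le> l" using level_lower[OF x] by (meson not_le)
qed

end

definition sg :: "nat set \<Rightarrow> nat \<Rightarrow> nat" where
  "sg T k = sorted_list_of_set T ! k"
definition ix :: "nat set \<Rightarrow> nat \<Rightarrow> nat" where
  "ix T = the_inv_into {..<card T} (sg T)"
definition res :: "nat set \<Rightarrow> (nat \<Rightarrow> real) \<Rightarrow> nat \<Rightarrow> real" where
  "res T x = (\<lambda>k. if k < card T then x (sg T k) else 0)"

lemma sg_bij: "finite T \<Longrightarrow> bij_betw (sg T) {..<card T} T"
proof -
  assume f: "finite T"
  let ?xs = "sorted_list_of_set T"
  have d: "distinct ?xs" and s: "set ?xs = T" and l: "length ?xs = card T"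
    using f by auto
  have "inj_on (sg T) {..<card T}" unfolding sg_def using inj_on_nth[OF d, of "{..<card T}"] l by auto
  moreover have "sg T ` {..<card T} = set ?xs" unfolding sg_def l[symmetric] set_conv_nth by auto
  then have "sg T ` {..<card T} = T" using s by simp
  ultimately show ?thesis by (simp add: bij_betw_def)
qed

lemma sg_in: "finite T \<Longrightarrow> k < card T \<Longrightarrow> sg T k \<in> T"
  using sg_bij bij_betwE by blast
lemma sg_inj: "finite T \<Longrightarrow> inj_on (sg T) {..<card T}"
  using sg_bij bij_betw_imp_inj_on by blast
lemma ix_props: "finite T \<Longrightarrow> i \<in> T \<Longrightarrow> ix T i < card T \<and> sg T (ix T i) = i"
  unfolding ix_def using sg_bij
  by (metis bij_betw_def f_the_inv_into_f lessThan_iff the_inv_into_into order_refl)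
lemma ix_sg: "finite T \<Longrightarrow> k < card T \<Longrightarrow> ix T (sg T k) = k"
  unfolding ix_def using sg_inj by (simp add: the_inv_into_f_f)

context arr begin

lemma res_Sp: assumes "T \<subseteq> {..<n}" "x \<in> Sp B n" shows "res T x \<in> Sp B (card T)"
proof -
  have f: "finite T" using assms(1) finite_subset by blast
  have "res T x \<in> Rn (card T)" unfolding res_def Rn_def by auto
  moreover have "res T x i - res T x j \<notin> B" if "i < card T" "j < card T" "i \<noteq> j" for i j
  proof -
    have "sg T i \<noteq> sg T j" using sg_inj[OF f] that by (auto dest: inj_onD)
    moreover have "sg T i < n" "sg T j < n" using sg_in[OF f] that assms(1) by auto
    ultimately show ?thesis using assms(2) that unfolding res_def Sp_iff by auto
  qed
  ultimately show ?thesis unfolding Sp_iff by auto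
qed

definition rcuts :: "nat set \<Rightarrow> (nat \<Rightarrow> real) \<Rightarrow> nat set set" where
  "rcuts S x = {U. U \<subseteq> S \<and> (\<forall>i\<in>U. \<forall>j\<in>S-U. c < x j - x i)}"

lemma res_cuts: assumes "finite S"
  shows "(\<lambda>U. sg S ` U) ` cuts c (card S) (res S x) = rcuts S x"
proof
  show "(\<lambda>U. sg S ` U) ` cuts c (card S) (res S x) \<subseteq> rcuts S x"
  proof
    fix V assume "V \<in> (\<lambda>U. sg S ` U) ` cuts c (card S) (res S x)"
    then obtain U where U: "U \<in> cuts c (card S) (res S x)" "V = sg S ` U" by blast
    have Us: "U \<subseteq> {..<card S}" using U(1) unfolding cuts_def by auto
    have "V \<subseteq> S" using U(2) Us sg_in[OF assms] by auto
    moreover have "c < x j - x i" if iV: "i \<in> V" and jV: "j \<in> S - V" for i j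
    proof -
      obtain k where k: "k \<in> U" "i = sg S k" using iV U(2) by auto
      obtain k' where k': "k' < card S" "j = sg S k'" using ix_props[OF assms, of j] jV by (metis DiffD1)
      have "k' \<notin> U" using k' jV U(2) by auto
      then have "c < res S x k' - res S x k" using U(1) k k' Us unfolding cuts_def by auto
      then show ?thesis using k k' Us unfolding res_def by auto
    qed
    ultimately show "V \<in> rcuts S x" unfolding rcuts_def by auto
  qed
next
  show "rcuts S x \<subseteq> (\<lambda>U. sg S ` U) ` cuts c (card S) (res S x)"
  proof
    fix V assume V: "V \<in> rcuts S x"
    define U where "U = {k. k < card S \<and> sg S k \<in> V}"
    have "sg S ` U = V"
    proof
      show "sg S ` U \<subseteq> V" unfolding U_def by auto
      show "V \<subseteq> sg S ` U"
      proof
        fix i assume "i \<in> V"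
        then have "i \<in> S" using V unfolding rcuts_def by auto
        then show "i \<in> sg S ` U" using ix_props[OF assms, of i] \<open>i \<in> V\<close> unfolding U_def
          by (intro image_eqI[of _ _ "ix S i"]) auto
      qed
    qed
    moreover have "U \<in> cuts c (card S) (res S x)"
      unfolding cuts_def
    proof (intro CollectI conjI ballI)
      show "U \<subseteq> {..<card S}" unfolding U_def by auto
      fix k k' assume k: "k \<in> U" and k': "k' \<in> {..<card S} - U"
      have "sg S k' \<in> S - V" using k' sg_in[OF assms] unfolding U_def by auto
      then have "c < x (sg S k') - x (sg S k)" using V k unfolding rcuts_def U_def by auto
      then show "c < res S x k' - res S x k" using k k' unfolding res_def U_def by auto
    qed
    ultimately show "V \<in> (\<lambda>U. sg S ` U) ` cuts c (card S) (res S x)" by blast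
  qed
qed

lemma card_res_cuts: assumes "finite S"
  shows "card (cuts c (card S) (res S x)) = card (rcuts S x)"
proof -
  have "inj_on (\<lambda>U. sg S ` U) (cuts c (card S) (res S x))"
    by (rule inj_on_subset[OF inj_on_image_Pow[OF sg_inj[OF assms]]]) (auto simp: cuts_def)
  then show ?thesis using res_cuts[OF assms, of x] card_image by metis
qed

lemma rcuts_low: assumes "T \<in> cuts c n x" shows "rcuts T x = {U \<in> cuts c n x. U \<subseteq> T}"
  using assms unfolding rcuts_def cuts_def by blast

lemma rcuts_high: assumes "T \<in> cuts c n x"
  shows "card (rcuts ({..<n} - T) x) = card {U \<in> cuts c n x. T \<subseteq> U}"
proof -
  have "(\<lambda>U'. T \<union> U') ` rcuts ({..<n} - T) x = {U \<in> cuts c n x. T \<subseteq> U}"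
  proof
    show "(\<lambda>U'. T \<union> U') ` rcuts ({..<n} - T) x \<subseteq> {U \<in> cuts c n x. T \<subseteq> U}"
      using assms unfolding rcuts_def cuts_def by blast
    show "{U \<in> cuts c n x. T \<subseteq> U} \<subseteq> (\<lambda>U'. T \<union> U') ` rcuts ({..<n} - T) x"
    proof
      fix U assume U: "U \<in> {U \<in> cuts c n x. T \<subseteq> U}"
      then have "U - T \<in> rcuts ({..<n} - T) x" unfolding rcuts_def cuts_def by blast
      moreover have "U = T \<union> (U - T)" using U by auto
      ultimately show "U \<in> (\<lambda>U'. T \<union> U') ` rcuts ({..<n} - T) x" by blast
    qed
  qed
  moreover have "inj_on (\<lambda>U'. T \<union> U') (rcuts ({..<n} - T) x)"
    by (rule inj_onI) (auto simp: rcuts_def)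
  ultimately show ?thesis using card_image by metis
qed

lemma card_le_rank: assumes "l \<le> kk n x"
  shows "card {U \<in> cuts c n x. rk (cuts c n x) U \<le> l} = Suc l"
    "card {U \<in> cuts c n x. l \<le> rk (cuts c n x) U} = Suc (kk n x) - l"
proof -
  let ?C = "cuts c n x"
  have inj: "inj_on (rk ?C) ?C" by (rule rk_inj[OF cuts_finite chainC])
  have img: "rk ?C ` ?C = {..<Suc (kk n x)}" using rk_image[OF cuts_finite chainC] cardC by simp
  have "card {U \<in> ?C. rk ?C U \<le> l} = card (rk ?C ` {U \<in> ?C. rk ?C U \<le> l})"
    by (rule card_image[symmetric]) (rule inj_on_subset[OF inj], auto)
  also have "rk ?C ` {U \<in> ?C. rk ?C U \<le> l} = {m \<in> rk ?C ` ?C. m \<le> l}" by auto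
  also have "\<dots> = {..l}" using img assms by auto
  finally show "card {U \<in> ?C. rk ?C U \<le> l} = Suc l" by simp
  have "card {U \<in> ?C. l \<le> rk ?C U} = card (rk ?C ` {U \<in> ?C. l \<le> rk ?C U})"
    by (rule card_image[symmetric]) (rule inj_on_subset[OF inj], auto)
  also have "rk ?C ` {U \<in> ?C. l \<le> rk ?C U} = {m \<in> rk ?C ` ?C. l \<le> m}" by auto
  also have "\<dots> = {l..<Suc (kk n x)}" using img assms by auto
  finally show "card {U \<in> ?C. l \<le> rk ?C U} = Suc (kk n x) - l" by simp
qed

lemma split_counts: assumes l: "l \<le> kk n x"
  shows "kk (card (UU n x l)) (res (UU n x l) x) = l"
    "kk (card ({..<n} - UU n x l)) (res ({..<n} - UU n x l) x) = kk n x - l"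
proof -
  let ?C = "cuts c n x" and ?T = "UU n x l"
  have T: "?T \<in> ?C" "rk ?C ?T = l" using UU_props[OF l] by auto
  have fT: "finite ?T" using UU_sub[OF l] finite_subset by blast
  have "{U \<in> ?C. U \<subseteq> ?T} = {U \<in> ?C. rk ?C U \<le> l}"
    using rk_le_iff[OF cuts_finite chainC _ T(1)] T(2) by auto
  then have "card (cuts c (card ?T) (res ?T x)) = Suc l"
    using card_res_cuts[OF fT] rcuts_low[OF T(1)] card_le_rank(1)[OF l] by simp
  then show "kk (card ?T) (res ?T x) = l" unfolding kk_def by simp
  have "{U \<in> ?C. ?T \<subseteq> U} = {U \<in> ?C. l \<le> rk ?C U}"
    using rk_le_iff[OF cuts_finite chainC T(1)] T(2) by auto
  then have "card (cuts c (card ({..<n} - ?T)) (res ({..<n} - ?T) x)) = Suc (kk n x) - l"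
    using card_res_cuts[of "{..<n} - ?T"] rcuts_high[OF T(1)] card_le_rank(2)[OF l] by simp
  then show "kk (card ({..<n} - ?T)) (res ({..<n} - ?T) x) = kk n x - l" unfolding kk_def
    using l by simp
qed

end

lemma card_image_eq_rel:
  assumes "\<And>x y. x \<in> X \<Longrightarrow> y \<in> X \<Longrightarrow> f x = f y \<longleftrightarrow> g x = g y"
  shows "card (f ` X) = card (g ` X)"
proof -
  define h where "h = (\<lambda>R. g (SOME x. x \<in> X \<and> f x = R))"
  have hf: "h (f x) = g x" if "x \<in> X" for x
  proof -
    have "\<exists>x'. x' \<in> X \<and> f x' = f x" using that by blast
    then have "(SOME x'. x' \<in> X \<and> f x' = f x) \<in> X \<and> f (SOME x'. x' \<in> X \<and> f x' = f x) = f x"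
      by (rule someI_ex)
    then show ?thesis unfolding h_def using assms that by blast
  qed
  have "inj_on h (f ` X)"
    by (rule inj_onI) (auto simp: hf assms)
  moreover have "h ` f ` X = g ` X" using hf by (auto simp: image_image)
  ultimately show ?thesis by (metis card_image)
qed

lemma same_refl: "same B n x x" and same_sym: "same B n x y \<Longrightarrow> same B n y x"
  and same_trans: "same B n x y \<Longrightarrow> same B n y z \<Longrightarrow> same B n x z"
  unfolding same_def by auto

lemma cl_eq_iff: assumes "x \<in> Sp B n" "x' \<in> Sp B n"
  shows "cl B n x = cl B n x' \<longleftrightarrow> same B n x x'"
proof
  assume "cl B n x = cl B n x'"
  then have "x' \<in> cl B n x" using cl_self[OF assms(2)] by simp
  then show "same B n x x'" by (simp add: cl_def)
next
  assume s: "same B n x x'"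
  show "cl B n x = cl B n x'"
    unfolding cl_def using s same_sym same_trans by blast
qed

lemma finite_cl: assumes "finite B" shows "finite (cl B n ` Sp B n)"
proof -
  define P where "P = (\<lambda>y::nat\<Rightarrow>real. {(i,j,a). i < n \<and> j < n \<and> a \<in> B \<and> y i - y j < a})"
  have "cl B n x = {y \<in> Sp B n. P y = P x}" for x
    unfolding cl_def same_def P_def by (auto simp: set_eq_iff)
  then have "cl B n ` Sp B n \<subseteq> (\<lambda>Q. {y \<in> Sp B n. P y = Q}) ` Pow ({..<n} \<times> {..<n} \<times> B)"
    unfolding P_def by auto
  moreover have "finite (Pow ({..<n} \<times> {..<n} \<times> B))" using assms by auto
  ultimately show ?thesis using finite_subset by blast
qed

context arr begin

definition XX :: "nat \<Rightarrow> nat \<Rightarrow> (nat \<Rightarrow> real) set" where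
  "XX n l = {x \<in> Sp B n. kk n x = l}"

lemma res_ix: "finite T \<Longrightarrow> i \<in> T \<Longrightarrow> res T x (ix T i) = x i"
  using ix_props unfolding res_def by auto

lemma same_res: assumes "T \<subseteq> {..<n}" "same B n x x'" shows "same B (card T) (res T x) (res T x')"
proof -
  have f: "finite T" using assms(1) finite_subset by blast
  show ?thesis unfolding same_def
  proof (intro allI impI ballI)
    fix i j a assume ij: "i < card T" "j < card T" "a \<in> B"
    have "sg T i < n" "sg T j < n" using sg_in[OF f] ij assms(1) by auto
    then show "(res T x i - res T x j < a) = (res T x' i - res T x' j < a)"
      using assms(2) ij unfolding same_def res_def by auto
  qed
qed

lemma same_from_parts:
  assumes T: "T \<subseteq> {..<n}" "T \<in> cuts c n x" "T \<in> cuts c n x'"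
    and s1: "same B (card T) (res T x) (res T x')"
    and s2: "same B (card ({..<n} - T)) (res ({..<n} - T) x) (res ({..<n} - T) x')"
  shows "same B n x x'"
  unfolding same_def
proof (intro allI impI ballI)
  fix i j a assume ij: "i < n" "j < n" and a: "a \<in> B"
  have fT: "finite T" using T(1) finite_subset by blast
  have fS: "finite ({..<n} - T)" by auto
  have a0: "0 \<le> a" "a \<le> c" using Brange a by auto
  consider "i \<in> T" "j \<in> T" | "i \<notin> T" "j \<notin> T" | "i \<in> T" "j \<notin> T" | "i \<notin> T" "j \<in> T" by blast
  then show "(x i - x j < a) = (x' i - x' j < a)"
  proof cases
    case 1
    then show ?thesis using s1 ix_props[OF fT] res_ix[OF fT] a unfolding same_def by metis
  next
    case 2
    then have "i \<in> {..<n} - T" "j \<in> {..<n} - T" using ij by auto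
    then show ?thesis using s2 ix_props[OF fS] res_ix[OF fS] a unfolding same_def by metis
  next
    case 3
    then have "c < x j - x i" "c < x' j - x' i" using T ij unfolding cuts_def by auto
    then show ?thesis using a0 by linarith
  next
    case 4
    then have "c < x i - x j" "c < x' i - x' j" using T ij unfolding cuts_def by auto
    then show ?thesis using a0 by linarith
  qed
qed

definition Phi :: "nat \<Rightarrow> nat \<Rightarrow> (nat \<Rightarrow> real) \<Rightarrow> nat set \<times> (nat \<Rightarrow> real) set \<times> (nat \<Rightarrow> real) set" where
  "Phi n l1 x = (UU n x l1, cl B (card (UU n x l1)) (res (UU n x l1) x),
       cl B (card ({..<n} - UU n x l1)) (res ({..<n} - UU n x l1) x))"

lemma cuts_eq_same: assumes "x \<in> Sp B n" "x' \<in> Sp B n" "same B n x x'"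
  shows "cuts c n x' = cuts c n x"
  using cuts_same[of x n x'] assms by (simp add: cl_def)

lemma UU_cong: "cuts c n x' = cuts c n x \<Longrightarrow> UU n x' m = UU n x m"
  unfolding UU_def by simp
lemma kk_cong: "cuts c n x' = cuts c n x \<Longrightarrow> kk n x' = kk n x"
  unfolding kk_def by simp

lemma Phi_iff:
  assumes x: "x \<in> XX n (l1 + l2)" and x': "x' \<in> XX n (l1 + l2)"
  shows "cl B n x = cl B n x' \<longleftrightarrow> Phi n l1 x = Phi n l1 x'"
proof -
  have xS: "x \<in> Sp B n" "kk n x = l1 + l2" and x'S: "x' \<in> Sp B n" "kk n x' = l1 + l2"
    using x x' by (auto simp: XX_def)
  have l1: "l1 \<le> kk n x" "l1 \<le> kk n x'" using xS x'S by auto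
  show ?thesis
  proof
    assume "cl B n x = cl B n x'"
    then have s: "same B n x x'" using cl_eq_iff xS x'S by blast
    have cu: "cuts c n x' = cuts c n x" by (rule cuts_eq_same[OF xS(1) x'S(1) s])
    define T where "T = UU n x l1"
    have TT: "UU n x' l1 = T" unfolding T_def by (rule UU_cong[OF cu])
    have Tn: "T \<subseteq> {..<n}" unfolding T_def by (rule UU_sub[OF l1(1)])
    have S'n: "{..<n} - T \<subseteq> {..<n}" by auto
    have "cl B (card T) (res T x) = cl B (card T) (res T x')"
      using cl_eq_iff[OF res_Sp[OF Tn xS(1)] res_Sp[OF Tn x'S(1)]] same_res[OF Tn s] by blast
    moreover have "cl B (card ({..<n} - T)) (res ({..<n} - T) x) = cl B (card ({..<n} - T)) (res ({..<n} - T) x')"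
      using cl_eq_iff[OF res_Sp[OF S'n xS(1)] res_Sp[OF S'n x'S(1)]] same_res[OF S'n s] by blast
    ultimately show "Phi n l1 x = Phi n l1 x'" unfolding Phi_def TT T_def[symmetric] by simp
  next
    assume P: "Phi n l1 x = Phi n l1 x'"
    define T where "T = UU n x l1"
    have TT: "UU n x' l1 = T" using P unfolding Phi_def T_def by simp
    have Tn: "T \<subseteq> {..<n}" unfolding T_def by (rule UU_sub[OF l1(1)])
    have S'n: "{..<n} - T \<subseteq> {..<n}" by auto
    have Tc: "T \<in> cuts c n x" "T \<in> cuts c n x'"
      using UU_props(1)[OF l1(1)] UU_props(1)[OF l1(2)] TT unfolding T_def by auto
    have e1: "cl B (card T) (res T x) = cl B (card T) (res T x')"
     and e2: "cl B (card ({..<n} - T)) (res ({..<n} - T) x) = cl B (card ({..<n} - T)) (res ({..<n} - T) x')"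
      using P unfolding Phi_def TT T_def[symmetric] by auto
    have "same B (card T) (res T x) (res T x')"
      using cl_eq_iff[OF res_Sp[OF Tn xS(1)] res_Sp[OF Tn x'S(1)]] e1 by blast
    moreover have "same B (card ({..<n} - T)) (res ({..<n} - T) x) (res ({..<n} - T) x')"
      using cl_eq_iff[OF res_Sp[OF S'n xS(1)] res_Sp[OF S'n x'S(1)]] e2 by blast
    ultimately have "same B n x x'" using same_from_parts[OF Tn Tc] by blast
    then show "cl B n x = cl B n x'" using cl_eq_iff xS x'S by blast
  qed
qed

definition FF :: "nat \<Rightarrow> nat \<Rightarrow> nat \<Rightarrow> nat set \<Rightarrow> ((nat \<Rightarrow> real) set \<times> (nat \<Rightarrow> real) set) set" where
  "FF n l1 l2 T = cl B (card T) ` XX (card T) l1 \<times> cl B (n - card T) ` XX (n - card T) l2"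

lemma Phi_sub: "Phi n l1 ` XX n (l1 + l2) \<subseteq> Sigma (Pow {..<n}) (FF n l1 l2)"
proof
  fix P assume "P \<in> Phi n l1 ` XX n (l1 + l2)"
  then obtain x where x: "x \<in> XX n (l1 + l2)" "P = Phi n l1 x" by blast
  have xS: "x \<in> Sp B n" "kk n x = l1 + l2" using x by (auto simp: XX_def)
  have l1: "l1 \<le> kk n x" using xS by simp
  define T where "T = UU n x l1"
  have Tn: "T \<subseteq> {..<n}" unfolding T_def by (rule UU_sub[OF l1])
  have S'n: "{..<n} - T \<subseteq> {..<n}" by auto
  have cS: "card ({..<n} - T) = n - card T" using Tn by (simp add: card_Diff_subset finite_subset)
  have "res T x \<in> XX (card T) l1" unfolding XX_def using res_Sp[OF Tn xS(1)] split_counts(1)[OF l1]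
    unfolding T_def by simp
  moreover have "res ({..<n} - T) x \<in> XX (n - card T) l2" unfolding XX_def
    using res_Sp[OF S'n xS(1)] split_counts(2)[OF l1] xS(2) cS unfolding T_def by simp
  ultimately show "P \<in> Sigma (Pow {..<n}) (FF n l1 l2)"
    unfolding x(2) Phi_def T_def[symmetric] FF_def using Tn cS by auto
qed

end

context arr begin

lemma Phi_sup:
  assumes Tn: "T \<subseteq> {..<n}" and y: "y \<in> XX (card T) l1" and z: "z \<in> XX (n - card T) l2"
  shows "(T, cl B (card T) y, cl B (n - card T) z) \<in> Phi n l1 ` XX n (l1 + l2)"
proof -
  define S' where "S' = {..<n} - T"
  have fT: "finite T" using Tn finite_subset by blast
  have fS: "finite S'" unfolding S'_def by auto
  have cS: "card S' = n - card T" unfolding S'_def using Tn fT by (simp add: card_Diff_subset)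
  have yS: "y \<in> Sp B (card T)" "kk (card T) y = l1" using y by (auto simp: XX_def)
  have zS: "z \<in> Sp B (card S')" "kk (card S') z = l2" using z cS by (auto simp: XX_def)
  define M where "M = (\<Sum>k<card T. \<bar>y k\<bar>) + (\<Sum>k<card S'. \<bar>z k\<bar>) + c + 1"
  define x where "x = (\<lambda>i. if i < n then (if i \<in> T then y (ix T i) else z (ix S' i) + M) else 0)"
  have hby: "\<bar>y k\<bar> \<le> (\<Sum>k<card T. \<bar>y k\<bar>)" if "k < card T" for k
    using that by (intro member_le_sum) auto
  have bz: "\<bar>z k\<bar> \<le> (\<Sum>k<card S'. \<bar>z k\<bar>)" if "k < card S'" for k
    using that by (intro member_le_sum) auto
  have ixT: "ix T i < card T" "sg T (ix T i) = i" if "i \<in> T" for i using ix_props[OF fT that] by auto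
  have ixS: "ix S' i < card S'" "sg S' (ix S' i) = i" if "i \<in> S'" for i using ix_props[OF fS that] by auto
  have resT: "res T x = y"
  proof
    fix k show "res T x k = y k"
    proof (cases "k < card T")
      case True
      then have "sg T k \<in> T" "sg T k < n" using sg_in[OF fT] Tn by auto
      then show ?thesis using True ix_sg[OF fT True] unfolding res_def x_def by simp
    next
      case False then show ?thesis using yS(1) unfolding res_def Sp_iff Rn_def by auto
    qed
  qed
  define z' where "z' = (\<lambda>k. if k < card S' then z k + M else 0)"
  have resS: "res S' x = z'"
  proof
    fix k show "res S' x k = z' k"
    proof (cases "k < card S'")
      case True
      then have "sg S' k \<in> S'" using sg_in[OF fS] by auto
      then show ?thesis using True ix_sg[OF fS True] unfolding res_def x_def z'_def S'_def by simp
    qed (simp add: res_def z'_def)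
  qed
  have z'S: "z' \<in> Sp B (card S')" using zS(1) unfolding z'_def Sp_iff Rn_def by auto
  have sz: "same B (card S') z z'" unfolding same_def z'_def by auto
  have clz: "cl B (card S') z' = cl B (card S') z" using cl_eq_iff[OF zS(1) z'S] sz by blast
  have cuz: "cuts c (card S') z' = cuts c (card S') z" by (rule cuts_eq_same[OF zS(1) z'S sz])
  have cross: "c < x j - x i" if "i \<in> T" "j \<in> S'" for i j
  proof -
    have "i < n" "j < n" "j \<notin> T" using that Tn unfolding S'_def by auto
    then have "x j - x i = z (ix S' j) + M - y (ix T i)" unfolding x_def using that by simp
    moreover have "\<bar>y (ix T i)\<bar> \<le> (\<Sum>k<card T. \<bar>y k\<bar>)" using hby ixT that by blast
    moreover have "\<bar>z (ix S' j)\<bar> \<le> (\<Sum>k<card S'. \<bar>z k\<bar>)" using bz ixS that by blast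
    ultimately show ?thesis unfolding M_def by linarith
  qed
  have Tcut: "T \<in> cuts c n x" unfolding cuts_def using Tn cross unfolding S'_def by blast
  have xS: "x \<in> Sp B n"
  proof -
    have "x \<in> Rn n" unfolding x_def Rn_def by auto
    moreover have "x i - x j \<notin> B" if ij: "i < n" "j < n" "i \<noteq> j" for i j
    proof -
      consider "i \<in> T" "j \<in> T" | "i \<in> S'" "j \<in> S'" | "i \<in> T" "j \<in> S'" | "i \<in> S'" "j \<in> T"
        using ij unfolding S'_def by blast
      then show ?thesis
      proof cases
        case 1
        have "ix T i \<noteq> ix T j" using ixT 1 ij by metis
        then have "y (ix T i) - y (ix T j) \<notin> B" using yS(1) ixT 1 unfolding Sp_iff by blast
        then show ?thesis using 1 ij unfolding x_def by simp
      next
        case 2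
        have "ix S' i \<noteq> ix S' j" using ixS 2 ij by metis
        then have "z (ix S' i) - z (ix S' j) \<notin> B" using zS(1) ixS 2 unfolding Sp_iff by blast
        then show ?thesis using 2 ij unfolding x_def S'_def by simp
      next
        case 3
        then have "x i - x j < - c" using cross by force
        then show ?thesis using Brange cpos by force
      next
        case 4
        then have "c < x i - x j" using cross by force
        then show ?thesis using Brange by force
      qed
    qed
    ultimately show ?thesis unfolding Sp_iff by auto
  qed
  let ?C = "cuts c n x"
  define A1 where "A1 = {U \<in> ?C. U \<subseteq> T}"
  define A2 where "A2 = {U \<in> ?C. T \<subseteq> U}"
  have cA1: "card A1 = Suc l1"
  proof -
    have "card A1 = card (rcuts T x)" unfolding A1_def using rcuts_low[OF Tcut] by simp
    also have "\<dots> = card (cuts c (card T) (res T x))" using card_res_cuts[OF fT] by simp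
    also have "\<dots> = Suc l1" using resT cardC[of "card T" y] yS(2) by simp
    finally show ?thesis .
  qed
  have cA2: "card A2 = Suc l2"
  proof -
    have "card A2 = card (rcuts S' x)" unfolding A2_def S'_def using rcuts_high[OF Tcut] by simp
    also have "\<dots> = card (cuts c (card S') (res S' x))" using card_res_cuts[OF fS] by simp
    also have "\<dots> = Suc l2" using resS cuz cardC[of "card S'" z] zS(2) by simp
    finally show ?thesis .
  qed
  have un: "?C = A1 \<union> A2" using chainC[of n x] Tcut unfolding A1_def A2_def chainS_def by blast
  have int: "A1 \<inter> A2 = {T}" using Tcut unfolding A1_def A2_def by auto
  have finA: "finite A1" "finite A2" unfolding A1_def A2_def using cuts_finite by auto
  have "card ?C + 1 = card A1 + card A2" using card_Un_Int[OF finA] un int by simp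
  then have kx: "kk n x = l1 + l2" using cA1 cA2 cardC[of n x] by simp
  have "rk ?C T = card (A1 - {T})"
    unfolding rk_def A1_def by (rule arg_cong[where f=card]) auto
  then have "rk ?C T = l1" using cA1 Tcut unfolding A1_def by simp
  then have UT: "UU n x l1 = T" using UU_eq[OF Tcut] by simp
  have "x \<in> XX n (l1 + l2)" using xS kx by (simp add: XX_def)
  moreover have "Phi n l1 x = (T, cl B (card T) y, cl B (n - card T) z)"
    unfolding Phi_def UT S'_def[symmetric] using resT resS clz cS by simp
  ultimately show ?thesis by (metis image_eqI)
qed

lemma Phi_image: "Phi n l1 ` XX n (l1 + l2) = Sigma (Pow {..<n}) (FF n l1 l2)"
proof
  show "Phi n l1 ` XX n (l1 + l2) \<subseteq> Sigma (Pow {..<n}) (FF n l1 l2)" by (rule Phi_sub)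
  show "Sigma (Pow {..<n}) (FF n l1 l2) \<subseteq> Phi n l1 ` XX n (l1 + l2)"
  proof
    fix P assume "P \<in> Sigma (Pow {..<n}) (FF n l1 l2)"
    then obtain T y z where "T \<subseteq> {..<n}" "y \<in> XX (card T) l1" "z \<in> XX (n - card T) l2"
      "P = (T, cl B (card T) y, cl B (n - card T) z)" unfolding FF_def by auto
    then show "P \<in> Phi n l1 ` XX n (l1 + l2)" using Phi_sup by simp
  qed
qed

lemma finite_clXX: "finite (cl B n ` XX n l)"
  by (rule finite_subset[OF _ finite_cl[OF finB, of n]]) (auto simp: XX_def)

lemma count_main:
  "card (cl B n ` XX n (l1 + l2)) =
     (\<Sum>i\<le>n. (n choose i) * card (cl B i ` XX i l1) * card (cl B (n - i) ` XX (n - i) l2))"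
proof -
  define a where "a = (\<lambda>i. card (cl B i ` XX i l1))"
  define b where "b = (\<lambda>i. card (cl B i ` XX i l2))"
  have "card (cl B n ` XX n (l1 + l2)) = card (Phi n l1 ` XX n (l1 + l2))"
    by (rule card_image_eq_rel) (rule Phi_iff)
  also have "\<dots> = card (Sigma (Pow {..<n}) (FF n l1 l2))" by (simp add: Phi_image)
  also have "\<dots> = (\<Sum>T\<in>Pow {..<n}. card (FF n l1 l2 T))"
    by (rule card_SigmaI) (auto simp: FF_def finite_clXX)
  also have "\<dots> = (\<Sum>T\<in>Pow {..<n}. a (card T) * b (n - card T))"
    unfolding FF_def a_def b_def by (simp add: card_cartesian_product)
  also have "\<dots> = (\<Sum>i\<le>n. (\<Sum>T\<in>{T \<in> Pow {..<n}. card T = i}. a (card T) * b (n - card T)))"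
    by (rule sum.group[symmetric]) (auto intro: card_mono[of "{..<n}", simplified])
  also have "\<dots> = (\<Sum>i\<le>n. (n choose i) * a i * b (n - i))"
  proof (rule sum.cong[OF refl])
    fix i assume "i \<in> {..n}"
    have "(\<Sum>T\<in>{T \<in> Pow {..<n}. card T = i}. a (card T) * b (n - card T)) =
          (\<Sum>T\<in>{T \<in> Pow {..<n}. card T = i}. a i * b (n - i))" by (rule sum.cong) auto
    also have "\<dots> = card {T \<in> Pow {..<n}. card T = i} * (a i * b (n - i))" by simp
    also have "card {T \<in> Pow {..<n}. card T = i} = n choose i"
      using n_subsets[of "{..<n}" i] by simp
    finally show "(\<Sum>T\<in>{T \<in> Pow {..<n}. card T = i}. a (card T) * b (n - card T)) = (n choose i) * a i * b (n - i)"
      by (simp add: mult.assoc)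
  qed
  finally show ?thesis unfolding a_def b_def .
qed

lemma regions_Hf: "regions (Hf B) n = cl B n ` Sp B n"
  unfolding regions_def Sp_def[symmetric] using component_eq_cl[OF finB] by auto

lemma r_level_Hf: "r_level l (Hf B) n = card (cl B n ` XX n l)"
proof -
  have "{R \<in> regions (Hf B) n. level n R = l} = cl B n ` XX n l"
    unfolding regions_Hf XX_def using level_eq by auto
  then show ?thesis unfolding r_level_def by simp
qed

end

lemma C_arr_Hf: "C_arr A = Hf (insert 0 A)"
proof (rule ext)
  fix n
  show "C_arr A n = Hf (insert 0 A) n"
  proof
    show "C_arr A n \<subseteq> Hf (insert 0 A) n"
    proof
      fix x assume "x \<in> C_arr A n"
      then consider i j where "i < j" "j < n" "x \<in> hyp n i j 0"
        | i j a where "i < n" "j < n" "i \<noteq> j" "a \<in> A" "x \<in> hyp n i j a"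
        unfolding C_arr_def by blast
      then show "x \<in> Hf (insert 0 A) n"
      proof cases
        case 1
        then have "i < n" "i \<noteq> j" "x \<in> Rn n" "x i - x j = 0" by (auto simp: hyp_def)
        then show ?thesis unfolding Hf_def using 1(2) by blast
      next
        case 2
        then have "x \<in> Rn n" "x i - x j \<in> insert 0 A" by (auto simp: hyp_def)
        then show ?thesis unfolding Hf_def using 2 by blast
      qed
    qed
    show "Hf (insert 0 A) n \<subseteq> C_arr A n"
    proof
      fix x assume "x \<in> Hf (insert 0 A) n"
      then obtain i j where ij: "x \<in> Rn n" "i < n" "j < n" "i \<noteq> j" "x i - x j \<in> insert 0 A"
        unfolding Hf_def by blast
      show "x \<in> C_arr A n"
      proof (cases "x i - x j \<in> A")
        case True
        then have "x \<in> hyp n i j (x i - x j)" using ij unfolding hyp_def by auto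
        then show ?thesis unfolding C_arr_def using ij True by blast
      next
        case False
        then have 0: "x i - x j = 0" using ij by auto
        show ?thesis
        proof (cases "i < j")
          case True
          then have "x \<in> hyp n i j 0" using ij 0 unfolding hyp_def by auto
          then show ?thesis unfolding C_arr_def using ij True by blast
        next
          case False
          then have "j < i" using ij by auto
          moreover have "x \<in> hyp n j i 0" using ij 0 unfolding hyp_def by auto
          ultimately show ?thesis unfolding C_arr_def using ij by blast
        qed
      qed
    qed
  qed
qed

lemma Cstar_arr_Hf: "Cstar_arr A = Hf A"
proof (rule ext)
  fix n
  show "Cstar_arr A n = Hf A n"
  proof
    show "Cstar_arr A n \<subseteq> Hf A n"
    proof
      fix x assume "x \<in> Cstar_arr A n"
      then obtain i j a where ij: "i < n" "j < n" "i \<noteq> j" "a \<in> A" "x \<in> hyp n i j a"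
        unfolding Cstar_arr_def by blast
      then have "x \<in> Rn n" "x i - x j \<in> A" by (auto simp: hyp_def)
      then show "x \<in> Hf A n" unfolding Hf_def using ij by blast
    qed
    show "Hf A n \<subseteq> Cstar_arr A n"
    proof
      fix x assume "x \<in> Hf A n"
      then obtain i j where ij: "x \<in> Rn n" "i < n" "j < n" "i \<noteq> j" "x i - x j \<in> A"
        unfolding Hf_def by blast
      then have "x \<in> hyp n i j (x i - x j)" unfolding hyp_def by auto
      then show "x \<in> Cstar_arr A n" unfolding Cstar_arr_def using ij by blast
    qed
  qed
qed

theorem theorem1p4:
  fixes A :: "real set" and H :: "nat \<Rightarrow> (nat \<Rightarrow> real) set"
    and l1 l2 n :: nat
  assumes "finite A" and "A \<noteq> {}" and "\<forall>a\<in>A. a > 0"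
    and "H = C_arr A \<or> H = Cstar_arr A"
  shows "r_level (l1 + l2) H n =
           (\<Sum>i\<le>n. (n choose i) * r_level l1 H i * r_level l2 H (n - i))"
proof -
  define B where "B = (if H = C_arr A then insert 0 A else A)"
  define c where "c = Max A"
  have cA: "c \<in> A" unfolding c_def using assms(1,2) by (rule Max_in)
  have "arr B c"
  proof
    show "finite B" unfolding B_def using assms(1) by auto
    show "c \<in> B" unfolding B_def using cA by auto
    show "0 < c" using cA assms(3) by auto
    show "\<forall>a\<in>B. 0 \<le> a \<and> a \<le> c"
      unfolding B_def c_def using assms(1,3) Max_ge[OF assms(1)] \<open>0 < c\<close>[unfolded c_def] by auto
  qed
  then interpret arr B c .
  have HB: "H = Hf B" unfolding B_def using assms(4) C_arr_Hf Cstar_arr_Hf by auto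
  show ?thesis unfolding HB r_level_Hf by (rule count_main)
qed

end
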